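(* Let $\mu:\mathbb{R}^{n\times n}\to\mathbb{R}$ be the matrix measure induced by a vector norm $|\cdot|$ on $\mathbb{R}^n$, and suppose $\mu$ satisfies any one of the following (equivalent) conditions: (1) $|\cdot|$ is orthant-monotonic; (2) $\mu(-D)\le 0$ for every $D\in\mathbb{D}^n_{\ge0}$; (3) $\mu(D)=\max_i\{d_{ii}\}$ for every $D\in\mathbb{D}^n_{\ge0}$; (4) there exists $A\in\mathbb{R}^{n\times n}$ with $\mu(A-D)<0$ for all $D\in\mathbb{D}^n_{\ge0}$. Then $\mu(D)=\max_i\{d_{ii}\}$ for every diagonal matrix $D\in\mathbb{R}^{n\times n}$ (with arbitrary real diagonal entries).
   Context: $\mathbb{D}^n_{\ge 0}$ denotes the set of $n\times n$ diagonal matrices with nonnegative diagonal entries. For a vector norm $|\cdot|$ on $\mathbb{R}^n$, the induced matrix norm is $\|A\|=\max_{|x|=1}|Ax|$ and the induced matrix measure is $\mu(A)=\lim_{\varepsilon\to0^+}(\|I_n+\varepsilon A\|-1)/\varepsilon$. A norm $|\cdot|$ on $\mathbb{R}^n$ is orthant-monotonic if for all $x,y\in\mathbb{R}^n$: whenever $x_iy_i\ge 0$ and $|x_i|\le|y_i|$ for all $i$, then $|x|\le|y|$. *)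

theory Defs
  imports "HOL-Analysis.Analysis"
begin

definition is_vnorm :: "(real ^ 'n \<Rightarrow> real) \<Rightarrow> bool" where
  "is_vnorm N \<longleftrightarrow>
     (\<forall>x. 0 \<le> N x) \<and> (\<forall>x. N x = 0 \<longleftrightarrow> x = 0) \<and>
     (\<forall>c x. N (c *s x) = \<bar>c\<bar> * N x) \<and> (\<forall>x y. N (x + y) \<le> N x + N y)"

definition ind_norm :: "(real ^ 'n \<Rightarrow> real) \<Rightarrow> real ^ 'n ^ 'n \<Rightarrow> real" where
  "ind_norm N A = Sup ((\<lambda>x. N (A *v x)) ` {x. N x = 1})"

definition mat_measure :: "(real ^ 'n \<Rightarrow> real) \<Rightarrow> real ^ 'n ^ 'n \<Rightarrow> real" where
  "mat_measure N A = Lim (at_right 0) (\<lambda>e. (ind_norm N (mat 1 + e *\<^sub>R A) - 1) / e)"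

definition orthant_monotonic :: "(real ^ 'n \<Rightarrow> real) \<Rightarrow> bool" where
  "orthant_monotonic N \<longleftrightarrow>
     (\<forall>x y. (\<forall>i. x $ i * y $ i \<ge> 0 \<and> \<bar>x $ i\<bar> \<le> \<bar>y $ i\<bar>) \<longrightarrow> N x \<le> N y)"

definition is_diag :: "real ^ 'n ^ 'n \<Rightarrow> bool" where
  "is_diag D \<longleftrightarrow> (\<forall>i j. i \<noteq> j \<longrightarrow> D $ i $ j = 0)"

definition nonneg_diag :: "real ^ 'n ^ 'n \<Rightarrow> bool" where
  "nonneg_diag D \<longleftrightarrow> is_diag D \<and> (\<forall>i. 0 \<le> D $ i $ i)"

definition max_diag :: "real ^ 'n ^ 'n \<Rightarrow> real" where
  "max_diag D = Max (range (\<lambda>i. D $ i $ i))"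

end

theory Submission
  imports Defs
begin

lemma vn_nonneg: "is_vnorm N \<Longrightarrow> 0 \<le> N x" by (simp add: is_vnorm_def)
lemma vn_zero: "is_vnorm N \<Longrightarrow> N x = 0 \<longleftrightarrow> x = 0" by (simp add: is_vnorm_def)
lemma vn_scale: "is_vnorm N \<Longrightarrow> N (c *\<^sub>R x) = \<bar>c\<bar> * N x"
  by (simp add: is_vnorm_def scalar_mult_eq_scaleR)
lemma vn_tri: "is_vnorm N \<Longrightarrow> N (x + y) \<le> N x + N y" by (simp add: is_vnorm_def)
lemma vn_neg: "is_vnorm N \<Longrightarrow> N (- x) = N x"
  using vn_scale[of N "-1" x] by simp
lemma vn_diff: "is_vnorm N \<Longrightarrow> \<bar>N x - N y\<bar> \<le> N (x - y)"
proof -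
  assume n: "is_vnorm N"
  have "N x \<le> N (x - y) + N y" using vn_tri[OF n, of "x - y" y] by simp
  moreover have "N y \<le> N (y - x) + N x" using vn_tri[OF n, of "y - x" x] by simp
  moreover have "N (y - x) = N (x - y)" using vn_neg[OF n, of "x - y"] by simp
  ultimately show ?thesis by linarith
qed

lemma vn_sum: assumes n: "is_vnorm N" and "finite S" shows "N (sum f S) \<le> (\<Sum>i\<in>S. N (f i))"
  using \<open>finite S\<close>
proof (induction S rule: finite_induct)
  case empty then show ?case using vn_zero[OF n, of 0] by simp
next
  case (insert a S)
  then show ?case using vn_tri[OF n, of "f a" "sum f S"] by simp
qed

lemma vn_upper: assumes n: "is_vnorm N" shows "\<exists>K>0. \<forall>x. N x \<le> K * norm x"
proof -
  define K where "K = 1 + (\<Sum>i\<in>UNIV. N (axis i (1::real) :: real^'a))"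
  have K: "K > 0" unfolding K_def using vn_nonneg[OF n] by (simp add: add_pos_nonneg sum_nonneg)
  have "N x \<le> K * norm x" for x :: "real^'a"
  proof -
    have "N x = N (\<Sum>i\<in>UNIV. x$i *\<^sub>R axis i 1)" using basis_expansion[of x]
      by (simp add: scalar_mult_eq_scaleR)
    also have "\<dots> \<le> (\<Sum>i\<in>UNIV. N (x$i *\<^sub>R axis i 1))" by (rule vn_sum[OF n]) simp
    also have "\<dots> = (\<Sum>i\<in>UNIV. \<bar>x$i\<bar> * N (axis i 1))" by (simp add: vn_scale[OF n])
    also have "\<dots> \<le> (\<Sum>i\<in>UNIV. norm x * N (axis i 1))"
      by (rule sum_mono, rule mult_right_mono) (auto simp: component_le_norm_cart vn_nonneg[OF n])
    also have "\<dots> = norm x * (K - 1)" by (simp add: K_def sum_distrib_left)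
    also have "\<dots> \<le> K * norm x" by (simp add: algebra_simps)
    finally show ?thesis .
  qed
  with K show ?thesis by blast
qed

lemma vn_lower: assumes n: "is_vnorm N" shows "\<exists>c>0. \<forall>x::real^'a. c * norm x \<le> N x"
proof -
  obtain K where K: "K > 0" "\<And>x::real^'a. N x \<le> K * norm x" using vn_upper[OF n] by blast
  have "K-lipschitz_on UNIV N"
  proof (rule lipschitz_onI)
    fix x y :: "real^'a"
    have "dist (N x) (N y) \<le> N (x - y)" using vn_diff[OF n] by (simp add: dist_real_def)
    also have "\<dots> \<le> K * dist x y" using K(2) by (simp add: dist_norm)
    finally show "dist (N x) (N y) \<le> K * dist x y" .
  qed (use K in simp)
  then have cont: "continuous_on (sphere 0 1) N"
    using lipschitz_on_continuous_on continuous_on_subset by blast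
  have ne: "sphere (0::real^'a) 1 \<noteq> {}" by simp
  obtain z where z: "z \<in> sphere 0 1" "\<And>y. y \<in> sphere 0 1 \<Longrightarrow> N z \<le> N y"
    using continuous_attains_inf[OF compact_sphere ne cont] by blast
  have zpos: "N z > 0" using z(1) vn_zero[OF n, of z] vn_nonneg[OF n, of z] by force
  have "N z * norm x \<le> N x" for x
  proof (cases "x = 0")
    case True then show ?thesis using vn_nonneg[OF n] by simp
  next
    case False
    have "(1/norm x) *\<^sub>R x \<in> sphere 0 1" using False by simp
    then have "N z \<le> N ((1/norm x) *\<^sub>R x)" by (rule z(2))
    also have "\<dots> = N x / norm x" by (simp add: vn_scale[OF n])
    finally show ?thesis using False by (simp add: field_simps)
  qed
  with zpos show ?thesis by blast
qed

lemma ind_bdd: assumes n: "is_vnorm N"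
  shows "bdd_above ((\<lambda>x. N (X *v x)) ` {x. N x = 1})"
proof -
  obtain K where K: "K > 0" "\<And>x::real^'a. N x \<le> K * norm x" using vn_upper[OF n] by blast
  obtain c where c: "c > 0" "\<And>x::real^'a. c * norm x \<le> N x" using vn_lower[OF n] by blast
  obtain B where B: "B > 0" "\<And>x. norm (X *v x) \<le> norm x * B"
    using bounded_linear.pos_bounded[OF matrix_vector_mul_bounded_linear[of X]] by blast
  have "N (X *v x) \<le> K * B / c" if "N x = 1" for x
  proof -
    have nx: "norm x \<le> 1 / c" using c(2)[of x] that c(1) by (simp add: field_simps)
    have "N (X *v x) \<le> K * (norm x * B)" using K(2)[of "X *v x"] B(2)[of x] K(1)
      by (meson mult_left_mono less_le order_trans)
    also have "\<dots> \<le> K * (1/c * B)" using nx K(1) B(1) by (intro mult_left_mono mult_right_mono) auto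
    finally show ?thesis by simp
  qed
  then show ?thesis unfolding bdd_above_def by blast
qed

lemma unit_ex: assumes n: "is_vnorm N" shows "\<exists>x::real^'a. N x = 1"
proof -
  obtain z :: "real^'a" where "z \<noteq> 0" by (metis axis_nth zero_index zero_neq_one)
  then have "N z > 0" using vn_zero[OF n, of z] vn_nonneg[OF n, of z] by force
  then have "N ((1 / N z) *\<^sub>R z) = 1" by (simp add: vn_scale[OF n])
  then show ?thesis by blast
qed

lemma ind_upper: "is_vnorm N \<Longrightarrow> N x = 1 \<Longrightarrow> N (X *v x) \<le> ind_norm N X"
  unfolding ind_norm_def by (rule cSup_upper) (auto intro: ind_bdd)

lemma ind_least: assumes n: "is_vnorm N" and h: "\<And>x. N x = 1 \<Longrightarrow> N (X *v x) \<le> M"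
  shows "ind_norm N X \<le> M"
  unfolding ind_norm_def using unit_ex[OF n] h by (intro cSup_least) auto

lemma ind_add: assumes n: "is_vnorm N" shows "ind_norm N (X + Y) \<le> ind_norm N X + ind_norm N Y"
proof (rule ind_least[OF n])
  fix x assume "N x = 1"
  then show "N ((X + Y) *v x) \<le> ind_norm N X + ind_norm N Y"
    using vn_tri[OF n, of "X *v x" "Y *v x"] ind_upper[OF n, of x X] ind_upper[OF n, of x Y]
    by (simp add: matrix_vector_mult_add_rdistrib)
qed

lemma ind_scale: assumes n: "is_vnorm N" shows "ind_norm N (c *\<^sub>R X) \<le> \<bar>c\<bar> * ind_norm N X"
proof (rule ind_least[OF n])
  fix x assume "N x = 1"
  then show "N ((c *\<^sub>R X) *v x) \<le> \<bar>c\<bar> * ind_norm N X"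
    using ind_upper[OF n, of x X]
    by (simp add: scaleR_matrix_vector_assoc[symmetric] vn_scale[OF n] mult_left_mono)
qed

lemma ind_id_le: "is_vnorm N \<Longrightarrow> ind_norm N (mat 1) \<le> 1"
  by (rule ind_least) auto

lemma ind_id_ge: "is_vnorm N \<Longrightarrow> 1 \<le> ind_norm N (mat 1)"
  using unit_ex[of N] ind_upper[of N _ "mat 1"] by fastforce

lemma ind_eig: assumes n: "is_vnorm N" and u: "u \<noteq> 0" and e: "X *v u = l *\<^sub>R u"
  shows "\<bar>l\<bar> \<le> ind_norm N X"
proof -
  have "N u > 0" using u vn_zero[OF n, of u] vn_nonneg[OF n, of u] by force
  define v where "v = (1 / N u) *\<^sub>R u"
  have v: "N v = 1" using \<open>N u > 0\<close> by (simp add: v_def vn_scale[OF n])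
  have "X *v v = l *\<^sub>R v" by (simp add: v_def matrix_vector_mult_scaleR e)
  then have "N (X *v v) = \<bar>l\<bar>" using v by (simp add: vn_scale[OF n])
  then show ?thesis using ind_upper[OF n v, of X] by simp
qed

definition qq :: "(real ^ 'n \<Rightarrow> real) \<Rightarrow> real ^ 'n ^ 'n \<Rightarrow> real \<Rightarrow> real" where
  "qq N A e = (ind_norm N (mat 1 + e *\<^sub>R A) - 1) / e"

lemma qq_lower: assumes n: "is_vnorm N" and e: "e > 0" shows "- ind_norm N A \<le> qq N A e"
proof -
  have h: "mat 1 = (mat 1 + e *\<^sub>R A) + (-e) *\<^sub>R A" by simp
  have "ind_norm N (mat 1) = ind_norm N ((mat 1 + e *\<^sub>R A) + (-e) *\<^sub>R A)" by (rule arg_cong[OF h])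
  then have "ind_norm N (mat 1) \<le> ind_norm N (mat 1 + e *\<^sub>R A) + \<bar>-e\<bar> * ind_norm N A"
    using ind_add[OF n, of "mat 1 + e *\<^sub>R A" "(-e) *\<^sub>R A"] ind_scale[OF n, of "-e" A] by linarith
  then have "1 - e * ind_norm N A \<le> ind_norm N (mat 1 + e *\<^sub>R A)"
    using ind_id_ge[OF n] e by simp
  then show ?thesis using e by (simp add: qq_def field_simps)
qed

lemma qq_mono: assumes n: "is_vnorm N" and e: "0 < e1" "e1 \<le> e2" shows "qq N A e1 \<le> qq N A e2"
proof -
  define t where "t = e1 / e2"
  have t: "0 < t" "t \<le> 1" using e by (auto simp: t_def)
  have "mat 1 + e1 *\<^sub>R A = t *\<^sub>R (mat 1 + e2 *\<^sub>R A) + (1 - t) *\<^sub>R mat 1"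
    using e by (simp add: t_def algebra_simps)
  then have "ind_norm N (mat 1 + e1 *\<^sub>R A) = ind_norm N (t *\<^sub>R (mat 1 + e2 *\<^sub>R A) + (1 - t) *\<^sub>R mat 1)"
    by (rule arg_cong)
  then have "ind_norm N (mat 1 + e1 *\<^sub>R A) \<le> \<bar>t\<bar> * ind_norm N (mat 1 + e2 *\<^sub>R A) + \<bar>1 - t\<bar> * ind_norm N (mat 1)"
    using ind_add[OF n, of "t *\<^sub>R (mat 1 + e2 *\<^sub>R A)" "(1 - t) *\<^sub>R mat 1"]
      ind_scale[OF n, of t "mat 1 + e2 *\<^sub>R A"] ind_scale[OF n, of "1 - t" "mat 1"] by linarith
  also have "\<dots> \<le> t * ind_norm N (mat 1 + e2 *\<^sub>R A) + (1 - t)"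
    using t ind_id_le[OF n] by (simp add: mult_left_le)
  finally have "ind_norm N (mat 1 + e1 *\<^sub>R A) - 1 \<le> t * (ind_norm N (mat 1 + e2 *\<^sub>R A) - 1)"
    by (simp add: algebra_simps)
  then show ?thesis using e by (simp add: qq_def t_def field_simps)
qed

lemma mu_inf: assumes n: "is_vnorm N" shows "mat_measure N A = Inf (qq N A ` {0<..})"
proof -
  have "(qq N A \<longlongrightarrow> Inf (qq N A ` ({0<..} \<inter> UNIV))) (at (0::real) within ({0<..} \<inter> UNIV))"
    by (rule Lim_right_bound[where K = "- ind_norm N A"]) (auto intro: qq_mono[OF n] qq_lower[OF n])
  then have "(qq N A \<longlongrightarrow> Inf (qq N A ` {0<..})) (at_right 0)" by simp
  then show ?thesis unfolding mat_measure_def qq_def[abs_def]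
    by (intro tendsto_Lim) (auto simp: qq_def)
qed

lemma mu_le: assumes n: "is_vnorm N" and e: "e > 0" shows "mat_measure N A \<le> qq N A e"
  unfolding mu_inf[OF n] using e
  by (intro cInf_lower) (auto intro!: bdd_belowI2 qq_lower[OF n])

lemma mu_ge: assumes n: "is_vnorm N" and h: "\<And>e. e > 0 \<Longrightarrow> L \<le> qq N A e" shows "L \<le> mat_measure N A"
  unfolding mu_inf[OF n] using h by (intro cInf_greatest) auto

lemma qq_sub: assumes n: "is_vnorm N" and e: "e > 0"
  shows "qq N (X + Y) (e/2) \<le> qq N X e + qq N Y e"
proof -
  have h: "mat 1 + (e/2) *\<^sub>R (X + Y) = (1/2) *\<^sub>R (mat 1 + e *\<^sub>R X) + (1/2) *\<^sub>R (mat 1 + e *\<^sub>R Y)"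
  proof -
    have "(1/2) *\<^sub>R (mat 1 + e *\<^sub>R X) + (1/2) *\<^sub>R (mat 1 + e *\<^sub>R Y)
      = ((1/2) + (1/2)) *\<^sub>R mat 1 + (e/2) *\<^sub>R (X + Y)"
      by (simp only: scaleR_add_right scaleR_add_left scaleR_scaleR add_ac) simp
    then show ?thesis by simp
  qed
  have "ind_norm N (mat 1 + (e/2) *\<^sub>R (X + Y)) = ind_norm N ((1/2) *\<^sub>R (mat 1 + e *\<^sub>R X) + (1/2) *\<^sub>R (mat 1 + e *\<^sub>R Y))"
    by (rule arg_cong[OF h])
  then have "ind_norm N (mat 1 + (e/2) *\<^sub>R (X + Y)) \<le> 1/2 * ind_norm N (mat 1 + e *\<^sub>R X) + 1/2 * ind_norm N (mat 1 + e *\<^sub>R Y)"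
    using ind_add[OF n, of "(1/2) *\<^sub>R (mat 1 + e *\<^sub>R X)" "(1/2) *\<^sub>R (mat 1 + e *\<^sub>R Y)"]
      ind_scale[OF n, of "1/2" "mat 1 + e *\<^sub>R X"] ind_scale[OF n, of "1/2" "mat 1 + e *\<^sub>R Y"] by simp
  then have ineq: "2 * ind_norm N (mat 1 + (e/2) *\<^sub>R (X + Y)) - 2 \<le> (ind_norm N (mat 1 + e *\<^sub>R X) + ind_norm N (mat 1 + e *\<^sub>R Y)) - 2"
    by simp
  have "qq N (X + Y) (e/2) = (2 * ind_norm N (mat 1 + (e/2) *\<^sub>R (X + Y)) - 2) / e"
    unfolding qq_def using e by (simp add: field_simps)
  also have "\<dots> \<le> ((ind_norm N (mat 1 + e *\<^sub>R X) + ind_norm N (mat 1 + e *\<^sub>R Y)) - 2) / e"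
    by (rule divide_right_mono[OF ineq]) (use e in simp)
  also have "\<dots> = qq N X e + qq N Y e"
    unfolding qq_def by (simp add: diff_divide_distrib add_divide_distrib)
  finally show ?thesis .
qed

lemma mu_sub: assumes n: "is_vnorm N"
  shows "mat_measure N (X + Y) \<le> mat_measure N X + mat_measure N Y"
proof -
  have a: "mat_measure N (X + Y) \<le> qq N X e1 + qq N Y e2" if "e1 > 0" "e2 > 0" for e1 e2
  proof -
    define e where "e = min e1 e2"
    have e: "e > 0" "e \<le> e1" "e \<le> e2" using that by (auto simp: e_def)
    have "mat_measure N (X + Y) \<le> qq N (X + Y) (e/2)" using e by (intro mu_le[OF n]) auto
    also have "\<dots> \<le> qq N X e + qq N Y e" using qq_sub[OF n e(1)] .
    also have "\<dots> \<le> qq N X e1 + qq N Y e2" using qq_mono[OF n e(1) e(2), where A=X] qq_mono[OF n e(1) e(3), where A=Y] by simp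
    finally show ?thesis .
  qed
  have b: "mat_measure N (X + Y) - qq N Y e2 \<le> mat_measure N X" if "e2 > 0" for e2
    by (rule mu_ge[OF n]) (use a that in force)
  have "mat_measure N (X + Y) - mat_measure N X \<le> mat_measure N Y"
    by (rule mu_ge[OF n]) (use b in force)
  then show ?thesis by simp
qed

lemma mu_hom: assumes n: "is_vnorm N" and t: "t > 0"
  shows "t * mat_measure N X \<le> mat_measure N (t *\<^sub>R X)"
proof (rule mu_ge[OF n])
  fix e :: real assume e: "e > 0"
  have "mat_measure N X \<le> qq N X (e * t)" using e t by (intro mu_le[OF n]) auto
  then have "t * mat_measure N X \<le> t * qq N X (e * t)" using t by simp
  also have "\<dots> = qq N (t *\<^sub>R X) e" using e t by (simp add: qq_def field_simps)
  finally show "t * mat_measure N X \<le> qq N (t *\<^sub>R X) e" .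
qed

lemma mu_id: assumes n: "is_vnorm N" shows "mat_measure N (c *\<^sub>R mat 1) \<le> c"
proof -
  define e where "e = 1 / (1 + \<bar>c\<bar>)"
  have e: "e > 0" "1 + e * c > 0"
  proof -
    show "e > 0" by (simp add: e_def add_pos_nonneg)
    have "e * \<bar>c\<bar> < 1" by (simp add: e_def field_simps)
    moreover have "e * (- \<bar>c\<bar>) \<le> e * c" using \<open>e > 0\<close> by (intro mult_left_mono) auto
    ultimately show "1 + e * c > 0" by simp
  qed
  have "mat 1 + e *\<^sub>R (c *\<^sub>R mat 1) = (1 + e * c) *\<^sub>R (mat 1 :: real^'a^'a)" by (simp add: algebra_simps)
  then have eq: "ind_norm N (mat 1 + e *\<^sub>R (c *\<^sub>R mat 1)) = ind_norm N ((1 + e * c) *\<^sub>R (mat 1 :: real^'a^'a))"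
    by (rule arg_cong)
  have "(1 + e * c) * ind_norm N (mat 1 :: real^'a^'a) \<le> 1 + e * c"
    using ind_id_le[OF n] e(2) by (intro mult_left_le) auto
  moreover have "ind_norm N ((1 + e * c) *\<^sub>R (mat 1 :: real^'a^'a)) \<le> (1 + e * c) * ind_norm N (mat 1 :: real^'a^'a)"
    using ind_scale[OF n, of "1 + e * c" "mat 1"] e(2) by simp
  ultimately have "ind_norm N (mat 1 + e *\<^sub>R (c *\<^sub>R mat 1)) \<le> 1 + e * c"
    unfolding eq by linarith
  then have "qq N (c *\<^sub>R mat 1) e \<le> c" using e by (simp add: qq_def field_simps)
  then show ?thesis using mu_le[OF n e(1)] by (meson order_trans)
qed

lemma md_ge: "D $ i $ i \<le> max_diag D"
  unfolding max_diag_def by (rule Max_ge) auto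
lemma md_ex: "\<exists>k. max_diag D = D $ k $ k"
proof -
  have "max_diag D \<in> range (\<lambda>i. D $ i $ i)" unfolding max_diag_def by (rule Max_in) auto
  then show ?thesis by auto
qed
lemma md_le: "(\<And>i. D $ i $ i \<le> c) \<Longrightarrow> max_diag D \<le> c"
  unfolding max_diag_def by (subst Max_le_iff) auto

lemma diag_mulv: "is_diag D \<Longrightarrow> (D *v x) $ i = D $ i $ i * x $ i"
proof -
  assume d: "is_diag D"
  have "(D *v x) $ i = (\<Sum>j\<in>UNIV. D $ i $ j * x $ j)" by (simp add: matrix_vector_mult_def)
  also have "\<dots> = (\<Sum>j\<in>UNIV. if j = i then D $ i $ i * x $ i else 0)"
    by (rule sum.cong) (use d in \<open>auto simp: is_diag_def\<close>)
  finally show ?thesis by simp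
qed

lemma mat1_c: "(mat 1 :: real^'a^'a) $ i $ j = (if i = j then 1 else 0)"
  by (simp add: mat_def)

lemma step1: assumes n: "is_vnorm N" and om: "orthant_monotonic N" and D: "nonneg_diag D"
  shows "mat_measure N (- D) \<le> 0"
proof -
  define e where "e = 1 / (1 + max_diag D)"
  have "0 \<le> D $ undefined $ undefined" using D by (simp add: nonneg_diag_def)
  then have md0: "0 \<le> max_diag D" using md_ge[of D undefined] by linarith
  have e: "e > 0" unfolding e_def using md0 by simp
  have ed: "e * D $ i $ i \<le> 1" for i
  proof -
    have "e * D $ i $ i \<le> e * max_diag D" using e md_ge[of D i] by (simp add: mult_left_mono)
    also have "\<dots> \<le> 1" unfolding e_def using md0 by (simp add: field_simps)
    finally show ?thesis .
  qed
  have "ind_norm N (mat 1 + e *\<^sub>R (- D)) \<le> 1"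
  proof (rule ind_least[OF n])
    fix x :: "real^'a" assume x: "N x = 1"
    let ?y = "(mat 1 + e *\<^sub>R (- D)) *v x"
    have yc: "?y $ i = (1 - e * D $ i $ i) * x $ i" for i
      using diag_mulv[of D x i] D unfolding nonneg_diag_def
      by (simp add: matrix_vector_mult_add_rdistrib scaleR_matrix_vector_assoc[symmetric] algebra_simps)
    have "\<forall>i. ?y $ i * x $ i \<ge> 0 \<and> \<bar>?y $ i\<bar> \<le> \<bar>x $ i\<bar>"
    proof
      fix i
      have a: "0 \<le> 1 - e * D $ i $ i" "1 - e * D $ i $ i \<le> 1"
        using ed[of i] e D unfolding nonneg_diag_def by auto
      show "?y $ i * x $ i \<ge> 0 \<and> \<bar>?y $ i\<bar> \<le> \<bar>x $ i\<bar>"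
      proof
        have "0 \<le> (1 - e * D $ i $ i) * (x $ i * x $ i)" using a(1) by simp
        then show "?y $ i * x $ i \<ge> 0" unfolding yc by (simp add: mult.assoc)
        show "\<bar>?y $ i\<bar> \<le> \<bar>x $ i\<bar>" unfolding yc using a by (auto simp: abs_mult mult_left_le_one_le)
      qed
    qed
    then show "N ?y \<le> 1" using om x unfolding orthant_monotonic_def by metis
  qed
  then have "qq N (- D) e \<le> 0" using e by (simp add: qq_def divide_nonpos_pos)
  then show ?thesis using mu_le[OF n e, where A="- D"] by linarith
qed

lemma step2: assumes n: "is_vnorm N" and h: "\<forall>D. nonneg_diag D \<longrightarrow> mat_measure N (- D) \<le> 0"
  and D: "is_diag D" shows "mat_measure N D = max_diag D"
proof (rule antisym)
  define d where "d = max_diag D"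
  define D' where "D' = d *\<^sub>R mat 1 - D"
  have nD': "nonneg_diag D'" unfolding nonneg_diag_def is_diag_def D'_def
    using D md_ge[of D] by (auto simp: is_diag_def mat1_c d_def)
  have "D = d *\<^sub>R mat 1 + (- D')" by (simp add: D'_def)
  then have "mat_measure N D = mat_measure N (d *\<^sub>R mat 1 + (- D'))" by simp
  also have "\<dots> \<le> mat_measure N (d *\<^sub>R mat 1) + mat_measure N (- D')" by (rule mu_sub[OF n])
  also have "\<dots> \<le> d + 0" using mu_id[OF n, of d] h nD' by (meson add_mono)
  finally show "mat_measure N D \<le> max_diag D" by (simp add: d_def)
  obtain k where k: "max_diag D = D $ k $ k" using md_ex by blast
  show "max_diag D \<le> mat_measure N D"
  proof (rule mu_ge[OF n])
    fix e :: real assume e: "e > 0"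
    have "(mat 1 + e *\<^sub>R D) *v axis k 1 = (1 + e * D $ k $ k) *\<^sub>R axis k 1"
      using D by (auto simp: vec_eq_iff matrix_vector_mult_add_rdistrib scaleR_matrix_vector_assoc[symmetric]
          diag_mulv axis_def algebra_simps)
    moreover have ax: "axis k (1::real) \<noteq> 0" by (metis axis_nth zero_index zero_neq_one)
    ultimately have "\<bar>1 + e * D $ k $ k\<bar> \<le> ind_norm N (mat 1 + e *\<^sub>R D)"
      using ind_eig[OF n ax] by blast
    then have "1 + e * D $ k $ k \<le> ind_norm N (mat 1 + e *\<^sub>R D)" by linarith
    then show "max_diag D \<le> qq N D e" using e k by (simp add: qq_def field_simps)
  qed
qed

lemma step3: assumes n: "is_vnorm N" and h: "\<forall>D. nonneg_diag D \<longrightarrow> mat_measure N D = max_diag D"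
  and D: "nonneg_diag D" shows "mat_measure N (- D) \<le> 0"
proof -
  define d where "d = max_diag D"
  define D' where "D' = d *\<^sub>R mat 1 - D"
  have nD': "nonneg_diag D'" unfolding nonneg_diag_def is_diag_def D'_def
    using D md_ge[of D] by (auto simp: nonneg_diag_def is_diag_def mat1_c d_def)
  have mD': "max_diag D' \<le> d"
    by (rule md_le) (use D in \<open>auto simp: D'_def mat1_c nonneg_diag_def\<close>)
  have "- D = D' + (-d) *\<^sub>R mat 1" by (simp add: D'_def)
  then have "mat_measure N (- D) = mat_measure N (D' + (-d) *\<^sub>R mat 1)" by simp
  also have "\<dots> \<le> mat_measure N D' + mat_measure N ((-d) *\<^sub>R mat 1)" by (rule mu_sub[OF n])
  also have "\<dots> \<le> d + (-d)" using mu_id[OF n, of "-d"] h nD' mD' by (metis add_mono)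
  finally show ?thesis by simp
qed

lemma step4: assumes n: "is_vnorm N" and h: "\<forall>D. nonneg_diag D \<longrightarrow> mat_measure N (A - D) < 0"
  and D: "nonneg_diag D" shows "mat_measure N (- D) \<le> 0"
proof (rule ccontr)
  assume "\<not> ?thesis"
  then have m: "mat_measure N (- D) > 0" by simp
  define t where "t = (\<bar>mat_measure N (- A)\<bar> + 1) / mat_measure N (- D)"
  have t: "t > 0" using m by (simp add: t_def add_pos_nonneg)
  have ntD: "nonneg_diag (t *\<^sub>R D)" using D t by (auto simp: nonneg_diag_def is_diag_def)
  have "t * mat_measure N (- D) \<le> mat_measure N (t *\<^sub>R (- D))" by (rule mu_hom[OF n t])
  also have "t *\<^sub>R (- D) = (A - t *\<^sub>R D) + (- A)" by simp
  also have "mat_measure N \<dots> \<le> mat_measure N (A - t *\<^sub>R D) + mat_measure N (- A)" by (rule mu_sub[OF n])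
  also have "\<dots> < mat_measure N (- A)" using h ntD by simp
  finally have "t * mat_measure N (- D) < mat_measure N (- A)" .
  moreover have "t * mat_measure N (- D) = \<bar>mat_measure N (- A)\<bar> + 1" using m by (simp add: t_def)
  ultimately show False by linarith
qed

theorem corollary1:
  fixes N :: "real ^ 'n \<Rightarrow> real"
  assumes "is_vnorm N"
    and "orthant_monotonic N
         \<or> (\<forall>D. nonneg_diag D \<longrightarrow> mat_measure N (- D) \<le> 0)
         \<or> (\<forall>D. nonneg_diag D \<longrightarrow> mat_measure N D = max_diag D)
         \<or> (\<exists>A. \<forall>D. nonneg_diag D \<longrightarrow> mat_measure N (A - D) < 0)"
  shows "\<forall>D. is_diag D \<longrightarrow> mat_measure N D = max_diag D"
proof -
  have "\<forall>D. nonneg_diag D \<longrightarrow> mat_measure N (- D) \<le> 0"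
    using assms(2) step1[OF assms(1)] step3[OF assms(1)] step4[OF assms(1)] by blast
  then show ?thesis using step2[OF assms(1)] by blast
qed

end
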